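(* Let $\mathcal{LS}_{\mathfrak{A}_1}\langle X\rangle$ be the free algebra over a field of characteristic $0$ in the variety of left-symmetric algebras satisfying $(ab)c+(ba)c+(ac)b+(ca)b+(bc)a+(cb)a=0$, and equip it with the commutator $[a,b]=ab-ba$. Then every polynomial identity of degree at most $4$ satisfied by $(\mathcal{LS}_{\mathfrak{A}_1}\langle X\rangle,[\cdot,\cdot])$ is a consequence of anticommutativity and the Jacobi identity.
   Context: A left-symmetric algebra is an algebra with $(a,b,c)=(b,a,c)$, where $(a,b,c)=(ab)c-a(bc)$. *)

theory Defs
  imports Main
begin

text \<open>Formal nonassociative polynomials (without constant term) over a field 'k
  in countably many variables V 0, V 1, ...  They are syntax trees; equality in a
  given variety is the equational-logic derivability relation below.\<close>

datatype 'k nterm =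
    V nat
  | Z
  | Plus "'k nterm" "'k nterm"
  | Sc 'k "'k nterm"
  | Times "'k nterm" "'k nterm"

definition Minus :: "('k::field) nterm \<Rightarrow> 'k nterm \<Rightarrow> 'k nterm" where
  "Minus a b = Plus a (Sc (-1) b)"

text \<open>For ax closed under
  substitution this is membership in the T-ideal generated by the identities.\<close>

inductive deriv :: "(('k::field) nterm \<Rightarrow> bool) \<Rightarrow> 'k nterm \<Rightarrow> 'k nterm \<Rightarrow> bool"
  for ax :: "'k nterm \<Rightarrow> bool" where
  refl: "deriv ax a a"
| sym: "deriv ax a b \<Longrightarrow> deriv ax b a"
| trans: "deriv ax a b \<Longrightarrow> deriv ax b c \<Longrightarrow> deriv ax a c"
| cong_plus: "deriv ax a a' \<Longrightarrow> deriv ax b b' \<Longrightarrow> deriv ax (Plus a b) (Plus a' b')"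
| cong_sc: "deriv ax a a' \<Longrightarrow> deriv ax (Sc c a) (Sc c a')"
| cong_times: "deriv ax a a' \<Longrightarrow> deriv ax b b' \<Longrightarrow> deriv ax (Times a b) (Times a' b')"
| plus_assoc: "deriv ax (Plus (Plus a b) c) (Plus a (Plus b c))"
| plus_comm: "deriv ax (Plus a b) (Plus b a)"
| plus_zero: "deriv ax (Plus a Z) a"
| plus_neg: "deriv ax (Plus a (Sc (-1) a)) Z"
| sc_plus: "deriv ax (Sc c (Plus a b)) (Plus (Sc c a) (Sc c b))"
| sc_add: "deriv ax (Sc (c + d) a) (Plus (Sc c a) (Sc d a))"
| sc_mult: "deriv ax (Sc c (Sc d a)) (Sc (c * d) a)"
| sc_one: "deriv ax (Sc 1 a) a"
| times_plus_left: "deriv ax (Times (Plus a b) c) (Plus (Times a c) (Times b c))"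
| times_plus_right: "deriv ax (Times a (Plus b c)) (Plus (Times a b) (Times a c))"
| times_sc_left: "deriv ax (Times (Sc c a) b) (Sc c (Times a b))"
| times_sc_right: "deriv ax (Times a (Sc c b)) (Sc c (Times a b))"
| axiom: "ax t \<Longrightarrow> deriv ax t Z"

definition assoc_t :: "('k::field) nterm \<Rightarrow> 'k nterm \<Rightarrow> 'k nterm \<Rightarrow> 'k nterm" where
  "assoc_t a b c = Minus (Times (Times a b) c) (Times a (Times b c))"

definition LS_A1_ax :: "('k::field) nterm \<Rightarrow> bool" where
  "LS_A1_ax t \<longleftrightarrow> (\<exists>a b c.
      t = Minus (assoc_t a b c) (assoc_t b a c)
    \<or> t = Plus (Plus (Plus (Plus (Plus (Times (Times a b) c) (Times (Times b a) c))
                    (Times (Times a c) b)) (Times (Times c a) b))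
                    (Times (Times b c) a)) (Times (Times c b) a))"

definition Lie_ax :: "('k::field) nterm \<Rightarrow> bool" where
  "Lie_ax t \<longleftrightarrow> (\<exists>a b c.
      t = Plus (Times a b) (Times b a)
    \<or> t = Plus (Plus (Times (Times a b) c) (Times (Times b c) a)) (Times (Times c a) b))"

fun comm_eval :: "(nat \<Rightarrow> ('k::field) nterm) \<Rightarrow> 'k nterm \<Rightarrow> 'k nterm" where
  "comm_eval \<sigma> (V n) = \<sigma> n"
| "comm_eval \<sigma> Z = Z"
| "comm_eval \<sigma> (Plus a b) = Plus (comm_eval \<sigma> a) (comm_eval \<sigma> b)"
| "comm_eval \<sigma> (Sc c a) = Sc c (comm_eval \<sigma> a)"
| "comm_eval \<sigma> (Times a b) =
     Minus (Times (comm_eval \<sigma> a) (comm_eval \<sigma> b)) (Times (comm_eval \<sigma> b) (comm_eval \<sigma> a))"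

text \<open>Syntactic degree (an upper bound for the degree of the polynomial represented;
  every polynomial of degree d has a representative of syntactic degree d).\<close>
fun tdeg :: "'k nterm \<Rightarrow> nat" where
  "tdeg (V n) = 1"
| "tdeg Z = 0"
| "tdeg (Plus a b) = max (tdeg a) (tdeg b)"
| "tdeg (Sc c a) = tdeg a"
| "tdeg (Times a b) = tdeg a + tdeg b"

end

theory Submission imports Defs "HOL-Library.Function_Algebras" begin

lemma equivp_Lie: "equivp (deriv (Lie_ax::'k::field nterm \<Rightarrow> bool))"
  by (rule equivpI) (auto simp: reflp_def symp_def transp_def intro: deriv.intros)

quotient_type (overloaded) 'k lq = "('k::field) nterm" / "deriv Lie_ax"
  by (rule equivp_Lie)

instantiation lq :: (field) ab_group_add
begin
lift_definition zero_lq :: "'a lq" is Z .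
lift_definition plus_lq :: "'a lq \<Rightarrow> 'a lq \<Rightarrow> 'a lq" is Plus by (rule deriv.cong_plus)
lift_definition uminus_lq :: "'a lq \<Rightarrow> 'a lq" is "Sc (-1)" by (rule deriv.cong_sc)
lift_definition minus_lq :: "'a lq \<Rightarrow> 'a lq \<Rightarrow> 'a lq" is "\<lambda>a b. Plus a (Sc (-1) b)"
  by (intro deriv.cong_plus deriv.cong_sc)
instance
proof
  fix a b c :: "'a lq"
  show "a + b + c = a + (b + c)" by transfer (rule deriv.plus_assoc)
  show "a + b = b + a" by transfer (rule deriv.plus_comm)
  show "0 + a = a" by transfer (meson deriv.plus_comm deriv.plus_zero deriv.trans)
  show "- a + a = 0" by transfer (meson deriv.plus_comm deriv.plus_neg deriv.trans)
  show "a - b = a + - b" by transfer (rule deriv.refl)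
qed
end

lift_definition lsc :: "'k::field \<Rightarrow> 'k lq \<Rightarrow> 'k lq" is Sc by (rule deriv.cong_sc)
lift_definition lbr :: "'k::field lq \<Rightarrow> 'k lq \<Rightarrow> 'k lq" is Times by (rule deriv.cong_times)
lift_definition lv :: "nat \<Rightarrow> 'k::field lq" is V .

lemma lsc_add_right: "lsc c (x + y) = lsc c x + lsc c y"
  by transfer (rule deriv.sc_plus)
lemma lsc_add_left: "lsc (c + d) x = lsc c x + lsc d x"
  by transfer (rule deriv.sc_add)
lemma lsc_mult: "lsc c (lsc d x) = lsc (c * d) x"
  by transfer (rule deriv.sc_mult)
lemma lsc_one[simp]: "lsc 1 x = x"
  by transfer (rule deriv.sc_one)
lemma lsc_zero_left[simp]: "lsc 0 x = 0"
proof -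
  have "lsc 0 x = lsc 0 x + lsc 0 x" using lsc_add_left[of 0 0 x] by simp
  then show ?thesis by simp
qed
lemma lsc_zero_right[simp]: "lsc c 0 = 0"
proof -
  have "lsc c 0 = lsc c 0 + lsc c 0" using lsc_add_right[of c 0 0] by simp
  then show ?thesis by simp
qed
lemma lsc_neg1: "lsc (-1) x = - x"
  by transfer (rule deriv.refl)
lemma lsc_uminus_right: "lsc c (- x) = - lsc c x"
  by (metis lsc_mult lsc_neg1 mult.commute)
lemma lsc_diff_right: "lsc c (x - y) = lsc c x - lsc c y"
  by (simp only: diff_conv_add_uminus lsc_add_right lsc_uminus_right)
lemma lsc_uminus_left: "lsc (- c) x = - lsc c x"
  by (metis lsc_mult lsc_neg1 mult_minus1)

lemma lbr_add_left: "lbr (x + y) z = lbr x z + lbr y z"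
  by transfer (rule deriv.times_plus_left)
lemma lbr_add_right: "lbr x (y + z) = lbr x y + lbr x z"
  by transfer (rule deriv.times_plus_right)
lemma lbr_sc_left: "lbr (lsc c x) y = lsc c (lbr x y)"
  by transfer (rule deriv.times_sc_left)
lemma lbr_sc_right: "lbr x (lsc c y) = lsc c (lbr x y)"
  by transfer (rule deriv.times_sc_right)
lemma lbr_zero_left[simp]: "lbr 0 y = 0"
  by (metis lbr_sc_left lsc_zero_left)
lemma lbr_zero_right[simp]: "lbr x 0 = 0"
  by (metis lbr_sc_right lsc_zero_left)
lemma lbr_uminus_left: "lbr (- x) y = - lbr x y"
  by (metis lbr_sc_left lsc_neg1)
lemma lbr_uminus_right: "lbr x (- y) = - lbr x y"
  by (metis lbr_sc_right lsc_neg1)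
lemma lbr_diff_left: "lbr (x - y) z = lbr x z - lbr y z"
  by (simp only: diff_conv_add_uminus lbr_add_left lbr_uminus_left)
lemma lbr_diff_right: "lbr x (y - z) = lbr x y - lbr x z"
  by (simp only: diff_conv_add_uminus lbr_add_right lbr_uminus_right)

lemma lbr_anti0: "lbr x y + lbr y x = 0"
  by transfer (rule deriv.axiom, auto simp: Lie_ax_def)
lemma lbr_anti: "lbr x y = - lbr y x"
  using lbr_anti0[of x y] by (simp add: eq_neg_iff_add_eq_0)
lemma lbr_jacobi0: "lbr (lbr x y) z + lbr (lbr y z) x + lbr (lbr z x) y = 0"
  by transfer (rule deriv.axiom, auto simp: Lie_ax_def)

lemma lbr_sum_left: "lbr (sum_list xs) y = sum_list (map (\<lambda>x. lbr x y) xs)"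
  by (induction xs) (auto simp: lbr_add_left)
lemma lbr_sum_right: "lbr y (sum_list xs) = sum_list (map (\<lambda>x. lbr y x) xs)"
  by (induction xs) (auto simp: lbr_add_right)
lemma lsc_sum: "lsc c (sum_list xs) = sum_list (map (lsc c) xs)"
  by (induction xs) (auto simp: lsc_add_right)

fun rnq :: "'k::field lq \<Rightarrow> nat list \<Rightarrow> 'k lq" where
  "rnq Y [] = Y"
| "rnq Y (z # ws) = rnq (lbr Y (lv z)) ws"

fun lnq :: "nat list \<Rightarrow> 'k::field lq" where
  "lnq [] = 0"
| "lnq (a # ws) = rnq (lv a) ws"

fun ALr :: "(int \<times> nat list) list \<Rightarrow> nat list \<Rightarrow> (int \<times> nat list) list" where
  "ALr P [] = P"
| "ALr P (z # ws) = ALr (map (\<lambda>(s,w). (s, w @ [z])) P @ map (\<lambda>(s,w). (-s, z # w)) P) ws"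

fun AL :: "nat list \<Rightarrow> (int \<times> nat list) list" where
  "AL [] = []"
| "AL (a # ws) = ALr [(1,[a])] ws"

definition LP :: "(int \<times> nat list) list \<Rightarrow> 'k::field lq" where
  "LP P = sum_list (map (\<lambda>(s,w). lsc (of_int s) (lnq w)) P)"
definition RP :: "(int \<times> nat list) list \<Rightarrow> 'k::field lq \<Rightarrow> 'k lq" where
  "RP P Y = sum_list (map (\<lambda>(s,w). lsc (of_int s) (rnq Y w)) P)"

lemma rnq_append: "rnq Y (ws @ [z]) = lbr (rnq Y ws) (lv z)"
  by (induction ws arbitrary: Y) auto

lemma lnq_snoc: "w \<noteq> [] \<Longrightarrow> lnq (w @ [z]) = lbr (lnq w) (lv z)"
  by (cases w) (auto simp: rnq_append)

lemma rnq_lnq: "u \<noteq> [] \<Longrightarrow> rnq (lnq u) w = (lnq (u @ w) :: 'k::field lq)"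
proof (induction w arbitrary: u)
  case Nil then show ?case by simp
next
  case (Cons z w)
  have "rnq (lnq u) (z # w) = (rnq (lnq (u @ [z])) w :: 'k lq)" using Cons.prems by (simp add: lnq_snoc)
  also have "\<dots> = lnq (u @ [z] @ w)" using Cons.IH[of "u @ [z]"] by simp
  finally show ?case by simp
qed

lemma rnq_add: "rnq (X + Y) w = rnq X w + rnq Y w"
  by (induction w arbitrary: X Y) (auto simp: lbr_add_left)
lemma rnq_sc: "rnq (lsc c X) w = lsc c (rnq X w)"
  by (induction w arbitrary: X) (auto simp: lbr_sc_left)
lemma rnq_uminus: "rnq (- X) w = - rnq X w"
  by (metis lsc_neg1 rnq_sc)
lemma rnq_diff: "rnq (X - Y) w = rnq X w - rnq Y w"
  by (simp only: diff_conv_add_uminus rnq_add rnq_uminus)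

lemma RP_snoc: "RP (map (\<lambda>(s,w). (s, w @ [z])) P) Y = lbr (RP P Y) (lv z)"
  unfolding RP_def by (induction P) (auto simp: rnq_append lbr_add_left lbr_sc_left)

lemma RP_cons: "RP (map (\<lambda>(s,w). (-s, z # w)) P) Y = - RP P (lbr Y (lv z))"
  unfolding RP_def by (induction P) (auto simp: lsc_uminus_left)

lemma RP_append: "RP (P @ Q) Y = RP P Y + RP Q Y"
  unfolding RP_def by simp

lemma LP_append: "LP (P @ Q) = LP P + LP Q"
  unfolding LP_def by simp

lemma LP_snoc: "\<forall>w\<in>snd ` set P. w \<noteq> [] \<Longrightarrow> LP (map (\<lambda>(s,w). (s, w @ [z])) P) = lbr (LP P) (lv z)"
  unfolding LP_def by (induction P) (auto simp: lnq_snoc lbr_add_left lbr_sc_left)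

lemma LP_cons: "LP (map (\<lambda>(s,w). (-s, z # w)) P) = - RP P (lv z)"
  unfolding LP_def RP_def by (induction P) (auto simp: lsc_uminus_left)

lemma jac: "lbr (lbr Y X) W - lbr (lbr Y W) X = lbr Y (lbr X W)"
proof -
  have "lbr (lbr Y X) W + lbr (lbr X W) Y + lbr (lbr W Y) X = 0" by (rule lbr_jacobi0)
  moreover have "lbr (lbr W Y) X = - lbr (lbr Y W) X" by (metis lbr_anti lbr_uminus_left)
  moreover have "lbr (lbr X W) Y = - lbr Y (lbr X W)" by (rule lbr_anti)
  ultimately show ?thesis by (simp add: algebra_simps eq_neg_iff_add_eq_0)
qed

lemma ALr_R: "(\<And>Y. RP P Y = lbr Y X) \<Longrightarrow> RP (ALr P ws) Y = lbr Y (rnq X ws)"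
proof (induction ws arbitrary: P X Y)
  case Nil then show ?case by simp
next
  case (Cons z ws)
  let ?P = "map (\<lambda>(s,w). (s, w @ [z])) P @ map (\<lambda>(s,w). (-s, z # w)) P"
  have "RP ?P Y = lbr Y (lbr X (lv z))" for Y
    by (simp add: RP_append RP_snoc RP_cons Cons.prems jac[symmetric])
  then show ?case using Cons.IH[of ?P "lbr X (lv z)"] by simp
qed

lemma ALr_L: "(\<And>Y. RP P Y = lbr Y X) \<Longrightarrow> \<forall>w\<in>snd ` set P. w \<noteq> [] \<Longrightarrow>
   LP P = lsc (of_nat n) X \<Longrightarrow> LP (ALr P ws) = lsc (of_nat (n + length ws)) (rnq X ws)"
proof (induction ws arbitrary: P X n)
  case Nil then show ?case by simp
next
  case (Cons z ws)
  let ?P = "map (\<lambda>(s,w). (s, w @ [z])) P @ map (\<lambda>(s,w). (-s, z # w)) P"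
  have R: "RP ?P Y = lbr Y (lbr X (lv z))" for Y
    by (simp add: RP_append RP_snoc RP_cons Cons.prems jac[symmetric])
  have NE: "\<forall>w\<in>snd ` set ?P. w \<noteq> []" using Cons.prems(2) by auto
  have a: "lbr (lv z) X = - lbr X (lv z)" by (rule lbr_anti)
  have "LP ?P = lbr (lsc (of_nat n) X) (lv z) + lbr X (lv z)"
    using Cons.prems by (simp add: LP_append LP_snoc LP_cons a)
  also have "\<dots> = lsc (of_nat (Suc n)) (lbr X (lv z))"
    by (simp add: lbr_sc_left lsc_add_left algebra_simps)
  finally have L: "LP ?P = lsc (of_nat (Suc n)) (lbr X (lv z))" .
  show ?case using Cons.IH[OF R NE L] by simp
qed

lemma AL_R: "u \<noteq> [] \<Longrightarrow> RP (AL u) Y = (lbr Y (lnq u) :: 'k::field lq)"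
proof (cases u)
  case (Cons a ws)
  have "RP [(1,[a])] Y = lbr Y (lv a)" for Y :: "'k lq" by (simp add: RP_def)
  then show ?thesis using Cons ALr_R[of "[(1,[a])]" "lv a :: 'k lq" ws Y] by simp
qed simp

lemma AL_L: "u \<noteq> [] \<Longrightarrow> LP (AL u) = (lsc (of_nat (length u)) (lnq u) :: 'k::field lq)"
proof (cases u)
  case (Cons a ws)
  have "RP [(1,[a])] Y = lbr Y (lv a)" for Y :: "'k lq" by (simp add: RP_def)
  moreover have "LP [(1,[a])] = (lsc (of_nat 1) (lv a) :: 'k lq)" by (simp add: LP_def)
  ultimately show ?thesis using Cons ALr_L[of "[(1,[a])]" "lv a :: 'k lq" 1 ws] by simp
qed simp

lemma ALr_len: "\<forall>w\<in>snd ` set P. length w = n \<Longrightarrow> (s,w) \<in> set (ALr P ws) \<Longrightarrow> length w = n + length ws"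
proof (induction ws arbitrary: P n)
  case Nil then show ?case by force
next
  case (Cons z ws)
  let ?P = "map (\<lambda>(s,w). (s, w @ [z])) P @ map (\<lambda>(s,w). (-s, z # w)) P"
  have "\<forall>w\<in>snd ` set ?P. length w = Suc n" using Cons.prems(1) by auto
  then show ?case using Cons.IH[of ?P "Suc n"] Cons.prems(2) by simp
qed

lemma AL_len: "length w = length u" if "(s,w) \<in> set (AL u)"
proof (cases u)
  case (Cons a ws)
  then show ?thesis using that ALr_len[of "[(1,[a])]" 1 s w ws] by simp
qed (use that in simp)

lemma lbr_lnq: "u \<noteq> [] \<Longrightarrow> v \<noteq> [] \<Longrightarrow>
   lbr (lnq u) (lnq v) = (sum_list (map (\<lambda>(s,w). lsc (of_int s) (lnq (u @ w))) (AL v)) :: 'k::field lq)"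
  using AL_R[of v "lnq u :: 'k lq"] by (simp add: RP_def rnq_lnq case_prod_beta)

fun LN :: "'k::field nterm \<Rightarrow> ('k \<times> nat list) list" where
  "LN (V i) = [(1,[i])]"
| "LN Z = []"
| "LN (Plus a b) = LN a @ LN b"
| "LN (Sc c a) = map (\<lambda>(e,u). (c*e,u)) (LN a)"
| "LN (Times a b) = concat (map (\<lambda>(c,u). concat (map (\<lambda>(e,v).
       map (\<lambda>(s,w). (c*e*of_int s, u@w)) (AL v)) (LN b))) (LN a))"

definition LS :: "('k::field \<times> nat list) list \<Rightarrow> 'k lq" where
  "LS L = sum_list (map (\<lambda>(c,u). lsc c (lnq u)) L)"

lemma LN_words: "(c,u) \<in> set (LN t) \<Longrightarrow> u \<noteq> [] \<and> length u \<le> tdeg t"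
proof (induction t arbitrary: c u)
  case (Times a b)
  then obtain c1 u1 e v s w where h: "(c1,u1) \<in> set (LN a)" "(e,v) \<in> set (LN b)" "(s,w) \<in> set (AL v)"
     "u = u1 @ w" by auto
  from Times.IH(1)[OF h(1)] Times.IH(2)[OF h(2)] AL_len[OF h(3)] h(4) show ?case by auto
qed force+

lemma abs_plus: "abs_lq (Plus a b) = abs_lq a + abs_lq b" by (simp add: plus_lq.abs_eq)
lemma abs_sc: "abs_lq (Sc c a) = lsc c (abs_lq a)" by (simp add: lsc.abs_eq)
lemma abs_times: "abs_lq (Times a b) = lbr (abs_lq a) (abs_lq b)" by (simp add: lbr.abs_eq)
lemma abs_V: "abs_lq (V i) = lv i" by (simp add: lv.abs_eq)
lemma abs_Z: "abs_lq Z = 0" by (simp add: zero_lq.abs_eq)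

lemma LS_append: "LS (A @ B) = LS A + LS B" by (simp add: LS_def)
lemma LS_concat: "LS (concat Ls) = sum_list (map LS Ls)"
  by (induction Ls) (auto simp: LS_append, simp add: LS_def)

lemma sum_list_cong: "(\<And>x. x \<in> set xs \<Longrightarrow> f x = g x) \<Longrightarrow> sum_list (map f xs) = sum_list (map g xs)"
  by (metis map_cong)

lemma sum_list_concat: "sum_list (concat xss) = sum_list (map sum_list xss)"
  by (induction xss) auto

lemma lbr_LS_right: "lbr X (LS B) = sum_list (map (\<lambda>(e,v). lsc e (lbr X (lnq v))) B)"
  by (induction B) (auto simp: LS_def lbr_add_right lbr_sc_right)

lemma lbr_LS: "lbr (LS A) (LS B) =
   sum_list (map (\<lambda>(c,u). sum_list (map (\<lambda>(e,v). lsc (c*e) (lbr (lnq u) (lnq v))) B)) A)"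
proof (induction A)
  case Nil then show ?case by (simp add: LS_def)
next
  case (Cons p A)
  obtain c u where p: "p = (c,u)" by force
  have "LS (p # A) = lsc c (lnq u) + LS A" by (simp add: LS_def p)
  then have "lbr (LS (p # A)) (LS B) = lsc c (lbr (lnq u) (LS B)) + lbr (LS A) (LS B)"
    by (simp add: lbr_add_left lbr_sc_left)
  also have "lsc c (lbr (lnq u) (LS B)) = sum_list (map (\<lambda>(e,v). lsc (c*e) (lbr (lnq u) (lnq v))) B)"
    by (simp add: lbr_LS_right lsc_sum o_def split_def lsc_mult)
  finally show ?case by (simp add: Cons.IH p)
qed

lemma LS_helper: "u \<noteq> [] \<Longrightarrow> v \<noteq> [] \<Longrightarrow>
   LS (map (\<lambda>(s,w). (c*e*of_int s, u@w)) (AL v)) = lsc (c*e) (lbr (lnq u) (lnq v))"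
  by (simp add: lbr_lnq LS_def lsc_sum o_def case_prod_beta lsc_mult mult.assoc)

lemma abs_LN: "abs_lq t = LS (LN t)"
proof (induction t)
  case (V x) then show ?case by (simp add: abs_V LS_def)
next
  case Z then show ?case by (simp add: abs_Z LS_def)
next
  case (Plus a b) then show ?case by (simp add: abs_plus LS_append)
next
  case (Sc c a) then show ?case
    by (simp add: abs_sc LS_def lsc_sum o_def case_prod_beta lsc_mult)
next
  case (Times a b)
  have "abs_lq (Times a b) = lbr (LS (LN a)) (LS (LN b))" by (simp add: abs_times Times.IH)
  also have "\<dots> = sum_list (map (\<lambda>(c,u). sum_list (map (\<lambda>(e,v).
       LS (map (\<lambda>(s,w). (c*e*of_int s, u@w)) (AL v))) (LN b))) (LN a))"
    unfolding lbr_LS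
    apply (rule sum_list_cong)
    apply clarify
    apply (rule sum_list_cong)
    apply clarify
    apply (rule LS_helper[symmetric])
    using LN_words by blast+
  also have "\<dots> = LS (LN (Times a b))"
    by (simp add: LS_concat o_def split_def)
  finally show ?case .
qed

definition K :: "'k::field nterm \<Rightarrow> nat list \<Rightarrow> 'k" where
  "K t w = sum_list (map (\<lambda>(c,u). c * sum_list (map (\<lambda>(s,w'). of_int s * (if w' = w then 1 else 0)) (AL u))) (LN t))"

definition coef :: "('k::field \<times> nat list) list \<Rightarrow> nat list \<Rightarrow> 'k" where
  "coef L w = sum_list (map (\<lambda>(a,w'). if w' = w then a else 0) L)"

lemma coef_notin: "w \<notin> set (map snd L) \<Longrightarrow> coef L w = 0"
  unfolding coef_def by (induction L) auto

lemma regroup: "sum_list (map (\<lambda>(a,w). lsc a (g w)) L) =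
   (\<Sum>w\<in>set (map snd L). lsc (coef L w) (g w))"
proof (induction L)
  case Nil then show ?case by simp
next
  case (Cons p L)
  obtain a w0 where p: "p = (a,w0)" by force
  have c: "coef ((a,w0) # L) w = (if w0 = w then a else 0) + coef L w" for w
    by (simp add: coef_def)
  have s1: "(\<Sum>w\<in>insert w0 (set (map snd L)). lsc (coef L w) (g w)) = (\<Sum>w\<in>set (map snd L). lsc (coef L w) (g w))"
    by (cases "w0 \<in> set (map snd L)") (auto simp: coef_notin insert_absorb)
  have s2: "(\<Sum>w\<in>insert w0 (set (map snd L)). lsc (if w0 = w then a else 0) (g w)) = lsc a (g w0)"
  proof -
    have "(\<Sum>w\<in>insert w0 (set (map snd L)). lsc (if w0 = w then a else 0) (g w))
       = (\<Sum>w\<in>insert w0 (set (map snd L)). if w0 = w then lsc a (g w) else 0)"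
      by (rule sum.cong) auto
    also have "\<dots> = lsc a (g w0)" by (subst sum.delta') auto
    finally show ?thesis .
  qed
  show ?case
    by (simp only: p c lsc_add_left sum.distrib s1 s2 Cons.IH list.map list.set prod.sel
       sum_list.Cons prod.case)
qed

lemma key_lie:
  fixes t :: "'k::field_char_0 nterm"
  assumes "\<And>w. K t w = 0"
  shows "abs_lq t = 0"
proof -
  define FL where "FL = concat (map (\<lambda>(c,u). map (\<lambda>(s,w). (c / of_nat (length u) * of_int s, w)) (AL u)) (LN t))"
  have "abs_lq t = LS (LN t)" by (rule abs_LN)
  also have "\<dots> = sum_list (map (\<lambda>(a,w). lsc a (lnq w)) FL)"
    unfolding LS_def FL_def map_concat sum_list_concat map_map
  proof (rule sum_list_cong)
    fix x assume x: "x \<in> set (LN t)"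
    obtain c u where cu: "x = (c,u)" by force
    have u: "u \<noteq> []" using LN_words x cu by blast
    have n: "(of_nat (length u) :: 'k) \<noteq> 0" using u by simp
    have "lsc c (lnq u) = lsc (c / of_nat (length u)) (lsc (of_nat (length u)) (lnq u) :: 'k lq)"
      using n by (simp add: lsc_mult)
    also have "\<dots> = lsc (c / of_nat (length u)) (LP (AL u))" by (simp add: AL_L[OF u])
    finally show "(case x of (c, u) \<Rightarrow> lsc c (lnq u)) =
       (sum_list \<circ> (map (\<lambda>(a, w). lsc a (lnq w)) \<circ> (\<lambda>(c, u). map (\<lambda>(s, w). (c / of_nat (length u) * of_int s, w)) (AL u)))) x"
      by (simp add: cu LP_def lsc_sum o_def case_prod_beta lsc_mult)
  qed
  also have "\<dots> = (\<Sum>w\<in>set (map snd FL). lsc (coef FL w) (lnq w))" by (rule regroup)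
  also have "\<dots> = 0"
  proof (rule sum.neutral, rule ballI)
    fix w
    have "coef FL w = K t w / of_nat (length w)"
      unfolding coef_def FL_def K_def map_concat sum_list_concat map_map divide_inverse
        sum_list_mult_const[symmetric]
      apply (rule sum_list_cong)
      apply clarify
      apply (simp add: o_def case_prod_beta sum_list_const_mult[symmetric] sum_list_mult_const[symmetric])
      apply (rule sum_list_cong)
      apply (auto dest: AL_len)
      done
    then show "lsc (coef FL w) (lnq w) = 0" using assms by simp
  qed
  finally show ?thesis .
qed

datatype bas = L0 | K0 | K1 | Zb | H0 | H1 | H2 | Ub | Vb | Wb
  | G0 | G1 | G2 | G3 | Ab | Bb | Cb | Eb | Fb | Pb | Qb | Rb | Tb

type_synonym 'k mv = "bas \<Rightarrow> 'k"

definition mm :: "'k::field mv \<Rightarrow> 'k mv \<Rightarrow> 'k mv" where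
  "mm x y = (\<lambda>b. case b of
      Zb \<Rightarrow> x K0 * y K1
    | Ub \<Rightarrow> x H0 * y H1
    | Vb \<Rightarrow> x H2 * y H1
    | Wb \<Rightarrow> x H0 * y Vb + x H2 * y Ub
    | Ab \<Rightarrow> x G0 * y G1
    | Bb \<Rightarrow> x G1 * y G0
    | Cb \<Rightarrow> x G2 * y G1
    | Eb \<Rightarrow> x G1 * y G3 + x G3 * y G1
    | Fb \<Rightarrow> x G2 * y G3
    | Pb \<Rightarrow> x G0 * y Cb + x G2 * y Ab
    | Qb \<Rightarrow> 2 * (x G0 * y Eb) + 2 * (x G3 * y Ab) + x Ab * y G3 - x Bb * y G3
    | Rb \<Rightarrow> x G1 * y Fb + x G2 * y Eb + x G3 * y Cb
    | Tb \<Rightarrow> 2 * (x G0 * y Rb) + x G2 * y Qb + 2 * (x G3 * y Pb) + x Ab * y Fb - x Bb * y Fb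
    | _ \<Rightarrow> 0)"

lemma mm_simps[simp]:
  "mm x y L0 = 0" "mm x y K0 = 0" "mm x y K1 = 0" "mm x y H0 = 0" "mm x y H1 = 0" "mm x y H2 = 0"
  "mm x y G0 = 0" "mm x y G1 = 0" "mm x y G2 = 0" "mm x y G3 = 0"
  "mm x y Zb = x K0 * y K1"
  "mm x y Ub = x H0 * y H1"
  "mm x y Vb = x H2 * y H1"
  "mm x y Wb = x H0 * y Vb + x H2 * y Ub"
  "mm x y Ab = x G0 * y G1"
  "mm x y Bb = x G1 * y G0"
  "mm x y Cb = x G2 * y G1"
  "mm x y Eb = x G1 * y G3 + x G3 * y G1"
  "mm x y Fb = x G2 * y G3"
  "mm x y Pb = x G0 * y Cb + x G2 * y Ab"
  "mm x y Qb = 2 * (x G0 * y Eb) + 2 * (x G3 * y Ab) + x Ab * y G3 - x Bb * y G3"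
  "mm x y Rb = x G1 * y Fb + x G2 * y Eb + x G3 * y Cb"
  "mm x y Tb = 2 * (x G0 * y Rb) + x G2 * y Qb + 2 * (x G3 * y Pb) + x Ab * y Fb - x Bb * y Fb"
  by (simp_all add: mm_def)

definition msc :: "'k::field \<Rightarrow> 'k mv \<Rightarrow> 'k mv" where
  "msc c x = (\<lambda>b. c * x b)"

lemma msc_apply[simp]: "msc c x b = c * x b" by (simp add: msc_def)

fun evalM :: "(nat \<Rightarrow> 'k::field mv) \<Rightarrow> 'k nterm \<Rightarrow> 'k mv" where
  "evalM \<rho> (V n) = \<rho> n"
| "evalM \<rho> Z = 0"
| "evalM \<rho> (Plus a b) = evalM \<rho> a + evalM \<rho> b"
| "evalM \<rho> (Sc c a) = msc c (evalM \<rho> a)"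
| "evalM \<rho> (Times a b) = mm (evalM \<rho> a) (evalM \<rho> b)"

lemma mm_add_left: "mm (x + y) z = mm x z + mm y z"
  by (rule ext, case_tac xa) (simp_all add: algebra_simps)
lemma mm_add_right: "mm x (y + z) = mm x y + mm x z"
  by (rule ext, case_tac xa) (simp_all add: algebra_simps)
lemma mm_sc_left: "mm (msc c x) y = msc c (mm x y)"
  by (rule ext, case_tac xa) (simp_all add: algebra_simps)
lemma mm_sc_right: "mm x (msc c y) = msc c (mm x y)"
  by (rule ext, case_tac xa) (simp_all add: algebra_simps)

lemma LS1: "mm (mm x y) z + msc (-1) (mm x (mm y z)) + msc (-1) (mm (mm y x) z + msc (-1) (mm y (mm x z))) = 0"
  by (rule ext, case_tac xa) (simp_all add: algebra_simps)

lemma LS2: "mm (mm x y) z + mm (mm y x) z + mm (mm x z) y + mm (mm z x) y + mm (mm y z) x + mm (mm z y) x = 0"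
  by (rule ext, case_tac xa) (simp_all add: algebra_simps)

lemma evalM_sound: "deriv LS_A1_ax a b \<Longrightarrow> evalM \<rho> a = evalM \<rho> b"
proof (induction rule: deriv.induct)
  case (plus_neg a) show ?case by (rule ext) simp
next
  case (sc_plus c a b) show ?case by (rule ext) (simp add: algebra_simps)
next
  case (sc_add c d a) show ?case by (rule ext) (simp add: algebra_simps)
next
  case (sc_mult c d a) show ?case by (rule ext) (simp add: algebra_simps)
next
  case (sc_one a) show ?case by (rule ext) (simp add: algebra_simps)
next
  case (times_plus_left a b c) show ?case by (simp add: mm_add_left)
next
  case (times_plus_right a b c) show ?case by (simp add: mm_add_right)
next
  case (times_sc_left c a b) show ?case by (simp add: mm_sc_left)
next
  case (times_sc_right a c b) show ?case by (simp add: mm_sc_right)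
next
  case (axiom t)
  then show ?case
    unfolding LS_A1_ax_def assoc_t_def Minus_def
    by (auto simp only: evalM.simps LS1 LS2)
qed (simp_all add: algebra_simps)

definition mcom :: "'k::field mv \<Rightarrow> 'k mv \<Rightarrow> 'k mv" where
  "mcom x y = mm x y + msc (-1) (mm y x)"

lemma mcom_apply[simp]: "mcom x y b = mm x y b - mm y x b"
  by (simp add: mcom_def)

fun cevalM :: "(nat \<Rightarrow> 'k::field mv) \<Rightarrow> 'k nterm \<Rightarrow> 'k mv" where
  "cevalM \<tau> (V n) = \<tau> n"
| "cevalM \<tau> Z = 0"
| "cevalM \<tau> (Plus a b) = cevalM \<tau> a + cevalM \<tau> b"
| "cevalM \<tau> (Sc c a) = msc c (cevalM \<tau> a)"
| "cevalM \<tau> (Times a b) = mcom (cevalM \<tau> a) (cevalM \<tau> b)"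

lemma evalM_comm: "evalM \<tau> (comm_eval V f) = cevalM \<tau> f"
  by (induction f) (simp_all add: Minus_def mcom_def)

lemma mcom_add_left: "mcom (x + y) z = mcom x z + mcom y z"
  by (rule ext, case_tac xa) (simp_all add: algebra_simps)
lemma mcom_add_right: "mcom x (y + z) = mcom x y + mcom x z"
  by (rule ext, case_tac xa) (simp_all add: algebra_simps)
lemma mcom_sc_left: "mcom (msc c x) y = msc c (mcom x y)"
  by (rule ext, case_tac xa) (simp_all add: algebra_simps)
lemma mcom_sc_right: "mcom x (msc c y) = msc c (mcom x y)"
  by (rule ext, case_tac xa) (simp_all add: algebra_simps)
lemma mcom_anti: "mcom x y + mcom y x = 0"
  by (rule ext, case_tac xa) (simp_all add: algebra_simps)
lemma mcom_jacobi: "mcom (mcom x y) z + mcom (mcom y z) x + mcom (mcom z x) y = 0"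
  by (rule ext, case_tac xa) (simp_all add: algebra_simps)

lemma cevalM_sound: "deriv Lie_ax a b \<Longrightarrow> cevalM \<tau> a = cevalM \<tau> b"
proof (induction rule: deriv.induct)
  case (plus_neg a) show ?case by (rule ext) simp
next
  case (sc_plus c a b) show ?case by (rule ext) (simp add: algebra_simps)
next
  case (sc_add c d a) show ?case by (rule ext) (simp add: algebra_simps)
next
  case (sc_mult c d a) show ?case by (rule ext) (simp add: algebra_simps)
next
  case (sc_one a) show ?case by (rule ext) (simp add: algebra_simps)
next
  case (times_plus_left a b c) show ?case by (simp add: mcom_add_left)
next
  case (times_plus_right a b c) show ?case by (simp add: mcom_add_right)
next
  case (times_sc_left c a b) show ?case by (simp add: mcom_sc_left)
next
  case (times_sc_right a c b) show ?case by (simp add: mcom_sc_right)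
next
  case (axiom t)
  then show ?case
    unfolding Lie_ax_def
    by (auto simp only: cevalM.simps mcom_anti mcom_jacobi)
qed (simp_all add: algebra_simps)

lift_definition phiM :: "(nat \<Rightarrow> 'k::field mv) \<Rightarrow> 'k lq \<Rightarrow> 'k mv" is cevalM
  by (rule cevalM_sound)

lemma phiM_add: "phiM \<tau> (x + y) = phiM \<tau> x + phiM \<tau> y"
  by transfer simp
lemma phiM_zero: "phiM \<tau> 0 = 0"
  by transfer simp
lemma phiM_sc: "phiM \<tau> (lsc c x) = msc c (phiM \<tau> x)"
  by transfer simp
lemma phiM_br: "phiM \<tau> (lbr x y) = mcom (phiM \<tau> x) (phiM \<tau> y)"
  by transfer simp
lemma phiM_v: "phiM \<tau> (lv i) = \<tau> i"
  by transfer simp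
lemma phiM_sum: "phiM \<tau> (sum_list xs) = sum_list (map (phiM \<tau>) xs)"
  by (induction xs) (simp_all add: phiM_add phiM_zero)

fun rnM :: "(nat \<Rightarrow> 'k::field mv) \<Rightarrow> 'k mv \<Rightarrow> nat list \<Rightarrow> 'k mv" where
  "rnM \<tau> Y [] = Y"
| "rnM \<tau> Y (z # ws) = rnM \<tau> (mcom Y (\<tau> z)) ws"

fun lnM :: "(nat \<Rightarrow> 'k::field mv) \<Rightarrow> nat list \<Rightarrow> 'k mv" where
  "lnM \<tau> [] = 0"
| "lnM \<tau> (a # ws) = rnM \<tau> (\<tau> a) ws"

lemma phiM_rnq: "phiM \<tau> (rnq Y w) = rnM \<tau> (phiM \<tau> Y) w"
  by (induction w arbitrary: Y) (simp_all add: phiM_br phiM_v)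
lemma phiM_lnq: "phiM \<tau> (lnq u) = lnM \<tau> u"
  by (cases u) (simp_all add: phiM_rnq phiM_v phiM_zero)

lemma cevalM_LN: "cevalM \<tau> f = sum_list (map (\<lambda>(c,u). msc c (lnM \<tau> u)) (LN f))"
proof -
  have "cevalM \<tau> f = phiM \<tau> (abs_lq f)" by (simp add: phiM.abs_eq)
  also have "\<dots> = phiM \<tau> (LS (LN f))" by (simp add: abs_LN)
  also have "\<dots> = sum_list (map (\<lambda>(c,u). msc c (lnM \<tau> u)) (LN f))"
    by (simp add: LS_def phiM_sum o_def split_def phiM_sc phiM_lnq)
  finally show ?thesis .
qed

definition eqk :: "nat \<Rightarrow> nat \<Rightarrow> 'k::field" where
  "eqk x y = of_bool (x = y)"

definition indl :: "nat list \<Rightarrow> nat list \<Rightarrow> 'k::field" where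
  "indl x y = (if x = y then 1 else 0)"

lemma indl_simps[simp]: "indl [] [] = 1" "indl [] (y#ys) = 0" "indl (x#xs) [] = 0"
  "indl (x#xs) (y#ys) = eqk x y * indl xs ys"
  by (simp_all add: indl_def eqk_def)

definition tau :: "nat list \<Rightarrow> nat \<Rightarrow> 'k::field mv" where
  "tau w i = (\<lambda>b. case b of
      L0 \<Rightarrow> if length w = 1 then eqk i (w!0) else 0
    | K0 \<Rightarrow> if length w = 2 then eqk i (w!0) else 0
    | K1 \<Rightarrow> if length w = 2 then eqk i (w!1) else 0
    | H0 \<Rightarrow> if length w = 3 then eqk i (w!0) else 0
    | H1 \<Rightarrow> if length w = 3 then eqk i (w!1) else 0
    | H2 \<Rightarrow> if length w = 3 then eqk i (w!2) else 0
    | G0 \<Rightarrow> if length w = 4 then eqk i (w!0) else 0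
    | G1 \<Rightarrow> if length w = 4 then eqk i (w!1) else 0
    | G2 \<Rightarrow> if length w = 4 then eqk i (w!2) else 0
    | G3 \<Rightarrow> if length w = 4 then eqk i (w!3) else 0
    | _ \<Rightarrow> 0)"

definition lam :: "nat list \<Rightarrow> 'k::field mv \<Rightarrow> 'k" where
  "lam w x = (if length w = 1 then x L0 else if length w = 2 then x Zb
     else if length w = 3 then - x Wb else if length w = 4 then x Tb / 2 else 0)"

lemma tau_apply[simp]:
  "tau w i L0 = (if length w = 1 then eqk i (w!0) else 0)"
  "tau w i K0 = (if length w = 2 then eqk i (w!0) else 0)"
  "tau w i K1 = (if length w = 2 then eqk i (w!1) else 0)"
  "tau w i H0 = (if length w = 3 then eqk i (w!0) else 0)"
  "tau w i H1 = (if length w = 3 then eqk i (w!1) else 0)"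
  "tau w i H2 = (if length w = 3 then eqk i (w!2) else 0)"
  "tau w i G0 = (if length w = 4 then eqk i (w!0) else 0)"
  "tau w i G1 = (if length w = 4 then eqk i (w!1) else 0)"
  "tau w i G2 = (if length w = 4 then eqk i (w!2) else 0)"
  "tau w i G3 = (if length w = 4 then eqk i (w!3) else 0)"
  "tau w i Zb = 0" "tau w i Ub = 0" "tau w i Vb = 0" "tau w i Wb = 0"
  "tau w i Ab = 0" "tau w i Bb = 0" "tau w i Cb = 0" "tau w i Eb = 0" "tau w i Fb = 0"
  "tau w i Pb = 0" "tau w i Qb = 0" "tau w i Rb = 0" "tau w i Tb = 0"
  by (simp_all add: tau_def)

lemma lam_sum: "lam w (sum_list xs) = sum_list (map (lam w) xs)"
  by (induction xs) (auto simp: lam_def)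
lemma lam_sc: "lam w (msc c x) = c * lam w x"
  by (auto simp: lam_def)

lemma len_cases: "1 \<le> length xs \<Longrightarrow> length xs \<le> 4 \<Longrightarrow>
  (\<exists>a. xs = [a]) \<or> (\<exists>a b. xs = [a,b]) \<or> (\<exists>a b c. xs = [a,b,c]) \<or> (\<exists>a b c d. xs = [a,b,c,d])"
  by (cases xs; cases "tl xs"; cases "tl (tl xs)"; cases "tl (tl (tl xs))"; cases "tl (tl (tl (tl xs)))") auto

lemma ind_of_bool: "(if P then 1 else 0) = of_bool P" by simp

lemma table:
  assumes "1 \<le> length w" "length w \<le> 4" "1 \<le> length u" "length u \<le> 4"
  shows "lam w (lnM (tau w) u) =
     (sum_list (map (\<lambda>(s,w'). of_int s * (if w' = w then 1 else 0)) (AL u)) :: 'k::field_char_0)"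
  using len_cases[OF assms(1,2)] len_cases[OF assms(3,4)]
  by (elim disjE exE; simp add: lam_def indl_def[symmetric]; simp add: algebra_simps)

lemma sum_list_zero: "(\<And>x. x \<in> set xs \<Longrightarrow> f x = 0) \<Longrightarrow> sum_list (map f xs) = (0::'a::monoid_add)"
  by (induction xs) auto

theorem mainTheorem6:
  fixes f :: "('k::field_char_0) nterm"
  assumes "tdeg f \<le> 4"
    and "\<forall>\<sigma>. deriv LS_A1_ax (comm_eval \<sigma> f) Z"
  shows "deriv Lie_ax f Z"
proof -
  have H: "deriv LS_A1_ax (comm_eval V f) Z" using assms(2) by blast
  have KZ: "K f w = 0" for w
  proof (cases "1 \<le> length w \<and> length w \<le> 4")
    case True
    have "evalM (tau w) (comm_eval V f) = evalM (tau w) Z" by (rule evalM_sound[OF H])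
    then have "cevalM (tau w) f = 0" by (simp add: evalM_comm)
    then have "lam w (sum_list (map (\<lambda>(c,u). msc c (lnM (tau w) u)) (LN f))) = 0"
      by (simp add: cevalM_LN[symmetric] lam_def)
    then have "sum_list (map (\<lambda>(c,u). c * lam w (lnM (tau w) u)) (LN f)) = 0"
      by (simp add: lam_sum lam_sc o_def split_def)
    moreover have "sum_list (map (\<lambda>(c,u). c * lam w (lnM (tau w) u)) (LN f)) = K f w"
      unfolding K_def
    proof (rule sum_list_cong)
      fix x assume x: "x \<in> set (LN f)"
      obtain c u where cu: "x = (c,u)" by force
      have "u \<noteq> [] \<and> length u \<le> tdeg f" using LN_words x cu by blast
      then have "1 \<le> length u" "length u \<le> 4" using assms(1) by (auto simp: Suc_le_eq)
      then show "(case x of (c, u) \<Rightarrow> c * (lam w (lnM (tau w) u) :: 'k)) =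
        (case x of (c, u) \<Rightarrow> c * (\<Sum>(s, w')\<leftarrow>AL u. of_int s * (if w' = w then 1 else 0)))"
      proof -
        have T: "lam w (lnM (tau w) u) =
          (sum_list (map (\<lambda>(s,w'). of_int s * (if w' = w then 1 else 0)) (AL u)) :: 'k)"
          using True \<open>1 \<le> length u\<close> \<open>length u \<le> 4\<close> by (intro table) auto
        show ?thesis by (simp add: cu T)
      qed
    qed
    ultimately show ?thesis by simp
  next
    case False
    show ?thesis unfolding K_def
    proof (rule sum_list_zero)
      fix x assume x: "x \<in> set (LN f)"
      obtain c u where cu: "x = (c,u)" by force
      have "u \<noteq> [] \<and> length u \<le> tdeg f" using LN_words x cu by blast
      then have l: "1 \<le> length u" "length u \<le> 4" using assms(1) by (auto simp: Suc_le_eq)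
      have "(\<Sum>(s, w')\<leftarrow>AL u. (of_int s * (if w' = w then 1 else 0) :: 'k)) = 0"
      proof (rule sum_list_zero)
        fix y assume y: "y \<in> set (AL u)"
        obtain s w' where sw: "y = (s,w')" by force
        have "w' \<noteq> w" using AL_len[of s w' u] y sw l False by auto
        then show "(case y of (s, w') \<Rightarrow> (of_int s * (if w' = w then 1 else 0) :: 'k)) = 0"
          by (simp add: sw)
      qed
      then show "(case x of (c, u) \<Rightarrow> c * (\<Sum>(s, w')\<leftarrow>AL u. (of_int s * (if w' = w then 1 else 0) :: 'k))) = 0"
        by (simp add: cu)
    qed
  qed
  have "abs_lq f = 0" by (rule key_lie) (rule KZ)
  then have "abs_lq f = abs_lq (Z :: 'k nterm)" by (simp add: abs_Z)
  then show ?thesis by (simp add: lq.abs_eq_iff)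
qed

end
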